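(* For $u\ge0$ define $$\underline{\hat\kappa}^{VG}_{\tilde A}(u)=-\tilde A\tilde mu+\frac{e}{\eta}\Big[-\frac{e^{\tilde Au}\tilde Au}{C+D+2}\Big(\frac{1}{\tilde Au}\wedge1\Big)^{C+D+2}+\frac{e^{\tilde Au}}{C+D+1}\Big(\frac{1}{\tilde Au}\wedge1\Big)^{C+D+1}+\frac{\tilde Au}{C+D+2}-\frac{1+\tilde Au}{C+D+1}\Big],$$ which for $u\ge1/\tilde A$ equals $$-\tilde A\tilde mu+\frac{e}{\eta}\Big[\Big(\frac{1}{\tilde Au}\Big)^{C+D+1}e^{\tilde Au}\Big(\frac{1}{C+D+1}-\frac{1}{C+D+2}\Big)+\frac{\tilde Au}{C+D+2}-\frac{1+\tilde Au}{C+D+1}\Big].$$ Then $\hat\kappa^{VG}_{\tilde A}(u)\ge\underline{\hat\kappa}^{VG}_{\tilde A}(u)$ for all $u\ge0$.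
   Context: Variance-gamma setup: constants $\theta\in\mathbb R$, $\rho>0$, $\eta>0$; $C=\theta/\rho^2$, $D=\sqrt{\theta^2+2\rho^2/\eta}/\rho^2$ (so $C+D>0$), and assume $D-C>2$. Let $\tilde\kappa(x)=-\frac1\eta\ln\big(1-\frac{x^2\rho^2\eta}{2}-\theta\eta x\big)$ (the cumulant generating function of the VG process $\theta\tau_t+\rho W_{\tau_t}$ at time 1, $\tau$ a gamma subordinator with $\tau_t\sim\Gamma(t/\eta,1/\eta)$), and $\tilde m=\tilde\kappa(1)$. Let $\hat\nu$ be the measure on $(-1,\infty)\setminus\{0\}$ given by $\hat\nu(dx)=\frac{-1}{\eta\ln(x+1)}(x+1)^{C+D-1}\,dx$ for $x\in(-1,0)$ and $\hat\nu(dx)=\frac{1}{\eta\ln(x+1)}(x+1)^{C-D-1}\,dx$ for $x\in(0,\infty)$. For constants $A>0$, $\tilde s>0$, $\tilde A=A\tilde s$, define for $u\ge0$ $$\hat\kappa^{VG}_{\tilde A}(u)=-\tilde A\tilde mu+\int_{-1}^\infty\big(e^{-\tilde Aux}-1+\tilde Aux\big)\,\hat\nu(dx).$$ Here $a\wedge b=\min(a,b)$, with the convention $1/(\tilde A\cdot 0)\wedge 1=1$. *)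

theory Defs
  imports "HOL-Analysis.Analysis"
begin

definition vgC :: "real \<Rightarrow> real \<Rightarrow> real" where
  "vgC \<theta> \<rho> = \<theta> / \<rho>^2"

definition vgD :: "real \<Rightarrow> real \<Rightarrow> real \<Rightarrow> real" where
  "vgD \<theta> \<rho> \<eta> = sqrt (\<theta>^2 + 2 * \<rho>^2 / \<eta>) / \<rho>^2"

text \<open>Cumulant generating function of the VG process at time 1.\<close>
definition vg_kappa :: "real \<Rightarrow> real \<Rightarrow> real \<Rightarrow> real \<Rightarrow> real" where
  "vg_kappa \<theta> \<rho> \<eta> x = - (1/\<eta>) * ln (1 - x^2 * \<rho>^2 * \<eta> / 2 - \<theta> * \<eta> * x)"

definition vg_m :: "real \<Rightarrow> real \<Rightarrow> real \<Rightarrow> real" where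
  "vg_m \<theta> \<rho> \<eta> = vg_kappa \<theta> \<rho> \<eta> 1"

definition vg_nu_density :: "real \<Rightarrow> real \<Rightarrow> real \<Rightarrow> real \<Rightarrow> real" where
  "vg_nu_density \<theta> \<rho> \<eta> x =
     (if -1 < x \<and> x < 0 then -1 / (\<eta> * ln (x + 1)) * (x + 1) powr (vgC \<theta> \<rho> + vgD \<theta> \<rho> \<eta> - 1)
      else if 0 < x then 1 / (\<eta> * ln (x + 1)) * (x + 1) powr (vgC \<theta> \<rho> - vgD \<theta> \<rho> \<eta> - 1)
      else 0)"

definition vg_nu :: "real \<Rightarrow> real \<Rightarrow> real \<Rightarrow> real measure" where
  "vg_nu \<theta> \<rho> \<eta> = density lborel (\<lambda>x. ennreal (vg_nu_density \<theta> \<rho> \<eta> x))"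

definition kappa_hat :: "real \<Rightarrow> real \<Rightarrow> real \<Rightarrow> real \<Rightarrow> real \<Rightarrow> real" where
  "kappa_hat \<theta> \<rho> \<eta> At u =
     - At * vg_m \<theta> \<rho> \<eta> * u
     + (\<integral>x. (exp (- At * u * x) - 1 + At * u * x) \<partial>vg_nu \<theta> \<rho> \<eta>)"

definition minfac :: "real \<Rightarrow> real" where
  "minfac y = (if y = 0 then 1 else min (1 / y) 1)"

definition kappa_hat_lower :: "real \<Rightarrow> real \<Rightarrow> real \<Rightarrow> real \<Rightarrow> real \<Rightarrow> real" where
  "kappa_hat_lower \<theta> \<rho> \<eta> At u =
     (let C = vgC \<theta> \<rho>; D = vgD \<theta> \<rho> \<eta>; y = At * u in
      - At * vg_m \<theta> \<rho> \<eta> * u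
      + exp 1 / \<eta> *
        ( - exp y * y / (C + D + 2) * (minfac y) powr (C + D + 2)
          + exp y / (C + D + 1) * (minfac y) powr (C + D + 1)
          + y / (C + D + 2) - (1 + y) / (C + D + 1)))"

end

theory Submission imports Defs begin


lemma dens_meas: "vg_nu_density th r e \<in> borel_measurable borel"
  unfolding vg_nu_density_def by measurable

lemma powr_int01:
  fixes a :: real assumes "a > -1"
  shows "integrable lborel (\<lambda>t. indicator {0..1} t * t powr a)"
proof -
  have "(\<lambda>t. t powr a) absolutely_integrable_on {0..1}"
    by (rule nonnegative_absolutely_integrable_1[OF integrable_on_powr_from_0]) (use assms in auto)
  hence "integrable lebesgue (\<lambda>t. indicator {0..1} t *\<^sub>R t powr a)"
    unfolding set_integrable_def .
  hence "integrable lborel (\<lambda>t. indicator {0..1} t *\<^sub>R t powr a)"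
    by (subst (asm) integrable_completion) measurable
  thus ?thesis by simp
qed

lemma powr_int_inf:
  shows "integrable lborel (\<lambda>t. indicator {1..} t * t powr (-2::real))"
proof -
  have "(\<lambda>t. t powr (-2::real)) integrable_on {1..}"
    using has_integral_powr_to_inf[of "-2" 1] by (auto simp: integrable_on_def)
  hence "(\<lambda>t. t powr (-2::real)) absolutely_integrable_on {1..}"
    by (rule nonnegative_absolutely_integrable_1) auto
  hence "integrable lebesgue (\<lambda>t. indicator {1..} t *\<^sub>R t powr (-2::real))"
    unfolding set_integrable_def .
  hence "integrable lborel (\<lambda>t. indicator {1..} t *\<^sub>R t powr (-2::real))"
    by (subst (asm) integrable_completion) measurable
  thus ?thesis by simp
qed



lemma poly_int:
  fixes K b al be :: real assumes K: "K > 0" and b: "0 \<le> b"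
  shows "integrable lborel (\<lambda>t. indicator {0..b} t * (t powr K * (al + be * t)))"
    and "(\<integral>t. indicator {0..b} t * (t powr K * (al + be * t)) \<partial>lborel)
          = al * b powr (K+1) / (K+1) + be * b powr (K+2) / (K+2)"
proof -
  have cont: "continuous_on {0..b} (\<lambda>t. t powr K * (al + be * t))"
    using K by (intro continuous_intros continuous_on_powr') auto
  have si: "set_integrable lborel {0..b} (\<lambda>t. t powr K * (al + be * t))"
    unfolding set_integrable_def by (rule borel_integrable_compact[OF _ cont]) auto
  thus "integrable lborel (\<lambda>t. indicator {0..b} t * (t powr K * (al + be * t)))"
    unfolding set_integrable_def by simp
  define P where "P t = al * t powr (K+1) / (K+1) + be * t powr (K+2) / (K+2)" for t
  have "((\<lambda>t. t powr K * (al + be * t)) has_integral (P b - P 0)) {0..b}"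
  proof (rule fundamental_theorem_of_calculus_interior_strong[of "{}"])
    show "continuous_on {0..b} P" unfolding P_def using K
      by (intro continuous_intros continuous_on_powr') auto
    fix x assume x: "x \<in> {0<..<b} - {}"
    hence "x > 0" by auto
    have "(P has_real_derivative (al * ((K+1) * x powr K) / (K+1) + be * ((K+2) * x powr (K+1)) / (K+2))) (at x)"
    proof -
      have d1: "((\<lambda>t. t powr (K+1)) has_real_derivative (K+1) * x powr K) (at x)"
        using has_real_derivative_powr[OF \<open>x > 0\<close>, of "K+1"] by simp
      have d2: "((\<lambda>t. t powr (K+2)) has_real_derivative (K+2) * x powr (K+1)) (at x)"
        using has_real_derivative_powr[OF \<open>x > 0\<close>, of "K+2"] by (simp add: add.commute)
      show ?thesis unfolding P_def
        by (intro DERIV_add DERIV_cdivide DERIV_cmult d1 d2)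
    qed
    moreover have "al * ((K+1) * x powr K) / (K+1) + be * ((K+2) * x powr (K+1)) / (K+2) = x powr K * (al + be * x)"
    proof -
      have "x powr (K+1) = x powr K * x" using \<open>x>0\<close> by (simp add: powr_add)
      moreover have "K + 1 \<noteq> 0" "K + 2 \<noteq> 0" using K by auto
      ultimately have "al * ((K+1) * x powr K) / (K+1) = al * x powr K"
        "be * ((K+2) * x powr (K+1)) / (K+2) = be * x * x powr K" by auto
      thus ?thesis by (simp add: algebra_simps)
    qed
    ultimately show "(P has_vector_derivative x powr K * (al + be * x)) (at x)"
      by (simp add: has_real_derivative_iff_has_vector_derivative)
  qed (use b in auto)
  hence "integral {0..b} (\<lambda>t. t powr K * (al + be * t)) = P b - P 0" by (rule integral_unique)
  moreover have "P 0 = 0" unfolding P_def using K by simp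
  moreover have "(LINT t : {0..b} | lborel. t powr K * (al + be * t)) = integral {0..b} (\<lambda>t. t powr K * (al + be * t))"
    by (rule set_borel_integral_eq_integral[OF si])
  ultimately show "(\<integral>t. indicator {0..b} t * (t powr K * (al + be * t)) \<partial>lborel)
          = al * b powr (K+1) / (K+1) + be * b powr (K+2) / (K+2)"
    unfolding set_lebesgue_integral_def P_def by simp
qed



lemma ln_lb1: "0 < t \<Longrightarrow> t < 1 \<Longrightarrow> -1 / ln (t::real) \<ge> exp 1 * t"
proof -
  assume t: "0 < t" "t < 1"
  have "ln (1 / (exp 1 * t)) \<le> 1 / (exp 1 * t) - 1" using t by (intro ln_le_minus_one) auto
  hence "-1 - ln t \<le> 1 / (exp 1 * t) - 1" using t by (simp add: ln_div ln_mult)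
  hence a: "- ln t \<le> 1 / (exp 1 * t)" by simp
  have "ln t < 0" using t by simp
  have p: "exp 1 * t > 0" using t by simp
  have "(- ln t) * (exp 1 * t) \<le> 1" using a p by (simp add: pos_le_divide_eq)
  moreover have "- ln t > 0" using \<open>ln t < 0\<close> by simp
  ultimately have "exp 1 * t \<le> 1 / (- ln t)" by (subst pos_le_divide_eq) (auto simp: mult.commute)
  thus ?thesis by simp
qed

lemma ln_ub1: "0 < t \<Longrightarrow> t < 1 \<Longrightarrow> -1 / ln (t::real) \<le> 1 / (1 - t)"
proof -
  assume t: "0 < t" "t < 1"
  have "ln t \<le> t - 1" using t by (intro ln_le_minus_one) auto
  moreover have "ln t < 0" using t by simp
  ultimately show ?thesis using t by (simp add: field_simps)
qed

lemma ln_lb2: "1 < t \<Longrightarrow> ln (t::real) \<ge> (t - 1) / t"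
proof -
  assume t: "1 < t"
  have "ln (1/t) \<le> 1/t - 1" using t by (intro ln_le_minus_one) auto
  hence "- ln t \<le> 1/t - 1" using t by (simp add: ln_div)
  thus ?thesis using t by (simp add: field_simps)
qed

lemma exp_aux1: "(a::real) \<ge> 0 \<Longrightarrow> exp a - 1 - a \<le> a * exp a"
proof -
  assume a: "a \<ge> 0"
  have "1 + (-a) \<le> exp (-a)" by (rule exp_ge_add_one_self)
  hence "exp a * (1 - a) \<le> exp a * exp (-a)" by (intro mult_left_mono) auto
  hence "exp a * (1 - a) \<le> 1" by (simp add: exp_minus field_simps)
  thus ?thesis using a by (simp add: algebra_simps)
qed

lemma exp_aux2: "exp ((y::real) * (1 - t)) \<ge> exp y * (1 - y * t)"
proof -
  have "1 + (-(y*t)) \<le> exp (-(y*t))" by (rule exp_ge_add_one_self)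
  hence "exp y * (1 - y*t) \<le> exp y * exp (-(y*t))" by (intro mult_left_mono) auto
  also have "\<dots> = exp (y * (1 - t))" by (simp add: exp_add[symmetric] algebra_simps)
  finally show ?thesis .
qed

lemma F_nonneg: "exp (- (y::real) * x) - 1 + y * x \<ge> 0"
  using exp_ge_add_one_self[of "-y*x"] by simp



lemma key:
  fixes th r eta y m :: real
  defines "K \<equiv> vgC th r + vgD th r eta"
  assumes eta: "eta > 0" and K: "K > 0" and CD: "vgD th r eta - vgC th r > 2"
    and y: "y \<ge> 0" and m: "0 < m" "m \<le> 1"
  shows "(\<integral>x. (exp (- y * x) - 1 + y * x) \<partial>vg_nu th r eta) \<ge>
     (- (exp 1 / eta) * (1 + y)) / (K+1) + (exp 1 / eta * y) / (K+2)
     + (exp 1 / eta * exp y) * m powr (K+1) / (K+1) + (- (exp 1 / eta * exp y * y)) * m powr (K+2) / (K+2)"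
proof -
  define dn where "dn = vg_nu_density th r eta"
  define F where "F x = exp (- y * x) - 1 + y * x" for x
  define C where "C = vgC th r"
  define D where "D = vgD th r eta"
  have KCD: "K = C + D" unfolding K_def C_def D_def ..
  have dn_lo: "dn (-1 + t) = -1 / (eta * ln t) * t powr (K - 1)" if "0 < t" "t < 1" for t
    using that unfolding dn_def vg_nu_density_def K_def by simp
  have dn_hi: "dn (-1 + t) = 1 / (eta * ln t) * t powr (C - D - 1)" if "1 < t" for t
    using that unfolding dn_def vg_nu_density_def C_def D_def by simp
  have dn_0: "dn (-1 + t) = 0" if "t \<le> 0 \<or> t = 1" for t
    using that unfolding dn_def vg_nu_density_def by auto
  have dn_nn: "dn x \<ge> 0" for x
  proof -
    consider "x \<le> -1 \<or> x = 0" | "-1 < x \<and> x < 0" | "0 < x" by linarith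
    thus ?thesis
    proof cases
      case 1 thus ?thesis using dn_0[of "x+1"] by auto
    next
      case 2
      hence "ln (x+1) < 0" by simp
      hence "eta * ln (x+1) < 0" using eta by (simp add: mult_pos_neg)
      hence h: "-1 / (eta * ln (x+1)) \<ge> 0" by (simp add: divide_simps)
      have "dn x = (-1 / (eta * ln (x+1))) * (x+1) powr (K - 1)"
        using 2 unfolding dn_def vg_nu_density_def K_def by simp
      thus ?thesis using h by (simp only:) (rule mult_nonneg_nonneg, auto)
    next
      case 3
      hence "ln (x+1) > 0" by simp
      hence "1 / (eta * ln (x+1)) \<ge> 0" using eta by simp
      thus ?thesis using 3 unfolding dn_def vg_nu_density_def by simp
    qed
  qed
  have F_nn: "F x \<ge> 0" for x unfolding F_def by (rule F_nonneg)
  have dnm[measurable]: "dn \<in> borel_measurable borel" unfolding dn_def by (rule dens_meas)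
  have Fm[measurable]: "F \<in> borel_measurable borel" unfolding F_def by measurable
  have step1: "(\<integral>x. F x \<partial>vg_nu th r eta) = (\<integral>x. dn x * F x \<partial>lborel)"
    unfolding vg_nu_def dn_def[symmetric] using dn_nn
    by (subst integral_density) auto
  have step2: "(\<integral>x. dn x * F x \<partial>lborel) = (\<integral>t. dn (-1 + t) * F (-1 + t) \<partial>lborel)"
    using lborel_integral_real_affine[of 1 "\<lambda>x. dn x * F x" "-1"] by simp
  define G where "G t = dn (-1 + t) * F (-1 + t)" for t
  define c1 where "c1 = y * exp y / eta"
  define c2 where "c2 = y / eta"
  define H where "H t = c1 * (indicator {0..1} t * t powr (K - 1)) + c2 * (indicator {1..} t * t powr (-2::real))" for t
  define al1 where "al1 = - (exp 1 / eta) * (1 + y)"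
  define be1 where "be1 = exp 1 / eta * y"
  define al2 where "al2 = exp 1 / eta * exp y"
  define be2 where "be2 = - (exp 1 / eta * exp y * y)"
  define L where "L t = indicator {0..1} t * (t powr K * (al1 + be1 * t)) + indicator {0..m} t * (t powr K * (al2 + be2 * t))" for t
  have Gm[measurable]: "G \<in> borel_measurable borel" unfolding G_def by measurable
  have Hint: "integrable lborel H" unfolding H_def
    using powr_int01[of "K - 1"] powr_int_inf K by auto
  have G_nn: "G t \<ge> 0" for t unfolding G_def using dn_nn F_nn by simp
  have Fv: "F (-1 + t) = exp (y * (1 - t)) - 1 - y * (1 - t)" for t
    unfolding F_def by (simp add: algebra_simps)
  have GH: "G t \<le> H t" if h01: "t \<noteq> 0" "t \<noteq> 1" for t
  proof -
    consider "t < 0" | "0 < t \<and> t < 1" | "1 < t" using h01 by (cases "t < 0"; cases "t < 1") auto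
    thus ?thesis
    proof cases
      case 1
      hence "G t = 0" unfolding G_def using dn_0[of t] by simp
      moreover have "H t \<ge> 0" unfolding H_def c1_def c2_def using y eta by simp
      ultimately show ?thesis by simp
    next
      case 2
      hence t: "0 < t" "t < 1" by auto
      have Ht: "H t = c1 * t powr (K - 1)" unfolding H_def using t by simp
      define a where "a = y * (1 - t)"
      have a0: "a \<ge> 0" "a \<le> y" using t y unfolding a_def by (auto simp: mult_left_le)
      have "F (-1 + t) \<le> a * exp a" unfolding Fv a_def[symmetric] by (rule exp_aux1[OF a0(1)])
      also have "\<dots> \<le> y * (1 - t) * exp y" unfolding a_def using t y a0
        by (intro mult_left_mono) (auto simp: a_def)
      finally have Fb: "F (-1 + t) \<le> y * (1 - t) * exp y" .
      have q: "-1 / (eta * ln t) \<le> 1 / eta * (1 / (1 - t))"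
      proof -
        have "-1 / (eta * ln t) = 1 / eta * (-1 / ln t)" by simp
        also have "\<dots> \<le> 1 / eta * (1 / (1 - t))" using ln_ub1[OF t] eta by (intro mult_left_mono) auto
        finally show ?thesis .
      qed
      have "eta * ln t < 0" using t eta by (simp add: mult_pos_neg)
      hence q0: "-1 / (eta * ln t) \<ge> 0" by (simp add: divide_simps)
      have "G t = (-1 / (eta * ln t)) * (t powr (K - 1) * F (-1 + t))"
        unfolding G_def dn_lo[OF t] by simp
      also have "\<dots> \<le> (1 / eta * (1 / (1 - t))) * (t powr (K - 1) * (y * (1 - t) * exp y))"
        using q q0 Fb F_nn t eta by (intro mult_mono mult_left_mono) auto
      also have "\<dots> = H t" unfolding Ht c1_def
      proof -
        have "1 - t \<noteq> 0" "eta \<noteq> 0" using t eta by auto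
        thus "1 / eta * (1 / (1 - t)) * (t powr (K - 1) * (y * (1 - t) * exp y)) = y * exp y / eta * t powr (K - 1)"
          by (simp add: field_simps)
      qed
      finally show ?thesis .
    next
      case 3
      hence t: "1 < t" .
      have Ht: "H t = c2 * t powr (-2)" unfolding H_def using t by simp
      have "- y * (-1 + t) \<le> 0" using t y by (simp add: mult_nonneg_nonneg)
      hence "exp (- y * (-1 + t)) \<le> 1" by simp
      hence Fb: "F (-1 + t) \<le> y * (t - 1)" unfolding F_def by simp
      have lnp: "ln t > 0" using t by simp
      have q: "1 / (eta * ln t) \<le> 1 / eta * (t / (t - 1))"
      proof -
        have "1 / ln t \<le> t / (t - 1)"
          using ln_lb2[OF t] lnp t by (simp add: field_simps)
        hence "1 / eta * (1 / ln t) \<le> 1 / eta * (t / (t - 1))" using eta by (intro mult_left_mono) auto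
        thus ?thesis by simp
      qed
      have q0: "1 / (eta * ln t) \<ge> 0" using lnp eta by simp
      have "G t = (1 / (eta * ln t)) * (t powr (C - D - 1) * F (-1 + t))"
        unfolding G_def dn_hi[OF t] by simp
      also have "\<dots> \<le> (1 / eta * (t / (t - 1))) * (t powr (C - D - 1) * (y * (t - 1)))"
        using q q0 Fb F_nn t eta by (intro mult_mono mult_left_mono) auto
      also have "\<dots> = y / eta * (t powr (C - D - 1) * t)"
      proof -
        have "t - 1 \<noteq> 0" "eta \<noteq> 0" using t eta by auto
        thus ?thesis by (simp add: field_simps)
      qed
      also have "t powr (C - D - 1) * t = t powr (C - D)"
      proof -
        have "t powr (C - D - 1) * t powr 1 = t powr (C - D - 1 + 1)" by (rule powr_add[symmetric])
        thus ?thesis using t by simp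
      qed
      also have "y / eta * t powr (C - D) \<le> y / eta * t powr (-2)"
        using CD t y eta unfolding C_def D_def by (intro mult_left_mono powr_mono) auto
      also have "\<dots> = H t" unfolding Ht c2_def ..
      finally show ?thesis .
    qed
  qed
  have LG: "L t \<le> G t" if h01: "t \<noteq> 0" "t \<noteq> 1" "t \<noteq> m" for t
  proof -
    consider "t < 0" | "0 < t \<and> t < 1" | "1 < t" using h01 by (cases "t < 0"; cases "t < 1") auto
    thus ?thesis
    proof cases
      case 1
      hence "G t = 0" unfolding G_def using dn_0[of t] by simp
      moreover have "L t = 0" unfolding L_def using 1 m by simp
      ultimately show ?thesis by simp
    next
      case 3
      hence "L t = 0" unfolding L_def using m by simp
      thus ?thesis using G_nn[of t] by simp
    next
      case 2
      hence t: "0 < t" "t < 1" by auto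
      define gv where "gv = (if t < m then exp y * (1 - y * t) else 0) - 1 - y * (1 - t)"
      have Fg: "gv \<le> F (-1 + t)" unfolding Fv gv_def using exp_aux2[of y t] by auto
      have tK: "t * t powr (K - 1) = t powr K"
      proof -
        have "t powr 1 * t powr (K - 1) = t powr (1 + (K - 1))" by (rule powr_add[symmetric])
        thus ?thesis using t by simp
      qed
      have Lt: "L t = exp 1 / eta * t powr K * gv"
      proof (cases "t < m")
        case True
        hence "L t = t powr K * (al1 + be1 * t) + t powr K * (al2 + be2 * t)"
          unfolding L_def using t by simp
        moreover have "t powr K * (al1 + be1 * t) + t powr K * (al2 + be2 * t) = exp 1 / eta * t powr K * gv"
          unfolding gv_def al1_def be1_def al2_def be2_def using True eta by (simp add: field_simps)
        ultimately show ?thesis by simp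
      next
        case False
        hence "t > m" using h01 by auto
        hence "L t = t powr K * (al1 + be1 * t)" unfolding L_def using t by simp
        moreover have "t powr K * (al1 + be1 * t) = exp 1 / eta * t powr K * gv"
          unfolding gv_def al1_def be1_def using False eta by (simp add: field_simps)
        ultimately show ?thesis by simp
      qed
      have q: "-1 / (eta * ln t) \<ge> 1 / eta * (exp 1 * t)"
      proof -
        have "-1 / (eta * ln t) = 1 / eta * (-1 / ln t)" by simp
        moreover have "1 / eta * (exp 1 * t) \<le> 1 / eta * (-1 / ln t)" using ln_lb1[OF t] eta by (intro mult_left_mono) auto
        ultimately show ?thesis by simp
      qed
      have "L t = 1 / eta * (exp 1 * t) * (t powr (K - 1) * gv)"
        unfolding Lt tK[symmetric] by (simp add: algebra_simps)
      also have "\<dots> \<le> 1 / eta * (exp 1 * t) * (t powr (K - 1) * F (-1 + t))"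
        using Fg t eta by (intro mult_left_mono) auto
      also have "\<dots> \<le> (-1 / (eta * ln t)) * (t powr (K - 1) * F (-1 + t))"
        using q F_nn by (intro mult_right_mono) auto
      also have "\<dots> = G t" unfolding G_def dn_lo[OF t] by simp
      finally show ?thesis .
    qed
  qed
  have Gint: "integrable lborel G"
  proof (rule Bochner_Integration.integrable_bound[OF Hint])
    show "G \<in> borel_measurable lborel" by simp
    show "AE x in lborel. norm (G x) \<le> norm (H x)"
      using AE_lborel_singleton[of 0] AE_lborel_singleton[of 1]
    proof eventually_elim
      case (elim x)
      thus ?case using GH[of x] G_nn[of x] by simp
    qed
  qed
  have Lint1: "integrable lborel (\<lambda>t. indicator {0..1} t * (t powr K * (al1 + be1 * t)))"
    using poly_int(1)[OF K, of 1] by simp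
  have Lint2: "integrable lborel (\<lambda>t. indicator {0..m} t * (t powr K * (al2 + be2 * t)))"
    using poly_int(1)[OF K, of m] m by simp
  have Lint: "integrable lborel L" unfolding L_def using Lint1 Lint2 by simp
  have "(\<integral>t. L t \<partial>lborel) \<le> (\<integral>t. G t \<partial>lborel)"
  proof (rule integral_mono_AE[OF Lint Gint])
    show "AE x in lborel. L x \<le> G x"
      using AE_lborel_singleton[of 0] AE_lborel_singleton[of 1] AE_lborel_singleton[of m]
    proof eventually_elim
      case (elim x)
      thus ?case using LG[of x] by simp
    qed
  qed
  moreover have "(\<integral>t. L t \<partial>lborel) = al1 * 1 powr (K+1) / (K+1) + be1 * 1 powr (K+2) / (K+2)
      + (al2 * m powr (K+1) / (K+1) + be2 * m powr (K+2) / (K+2))"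
    unfolding L_def
    by (subst Bochner_Integration.integral_add[OF Lint1 Lint2], subst poly_int(2)[OF K], simp,
        subst poly_int(2)[OF K], use m in simp_all)
  ultimately show ?thesis
    unfolding F_def[symmetric] step1 step2 G_def[symmetric] al1_def be1_def al2_def be2_def
    by simp
qed



theorem mainTheorem16:
  fixes \<theta> \<rho> \<eta> A s :: real
  assumes "\<rho> > 0" and "\<eta> > 0"
    and "vgD \<theta> \<rho> \<eta> - vgC \<theta> \<rho> > 2"
    and "A > 0" and "s > 0"
  shows "(\<forall>u \<ge> 1 / (A * s).
            kappa_hat_lower \<theta> \<rho> \<eta> (A * s) u =
              - (A * s) * vg_m \<theta> \<rho> \<eta> * u
              + exp 1 / \<eta> *
                ( (1 / (A * s * u)) powr (vgC \<theta> \<rho> + vgD \<theta> \<rho> \<eta> + 1) * exp (A * s * u)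
                    * (1 / (vgC \<theta> \<rho> + vgD \<theta> \<rho> \<eta> + 1) - 1 / (vgC \<theta> \<rho> + vgD \<theta> \<rho> \<eta> + 2))
                  + A * s * u / (vgC \<theta> \<rho> + vgD \<theta> \<rho> \<eta> + 2)
                  - (1 + A * s * u) / (vgC \<theta> \<rho> + vgD \<theta> \<rho> \<eta> + 1)))
         \<and> (\<forall>u \<ge> 0. kappa_hat \<theta> \<rho> \<eta> (A * s) u \<ge> kappa_hat_lower \<theta> \<rho> \<eta> (A * s) u)"
proof -
  define C where "C = vgC \<theta> \<rho>"
  define D where "D = vgD \<theta> \<rho> \<eta>"
  define K where "K = C + D"
  have "sqrt (\<theta>^2) < sqrt (\<theta>^2 + 2 * \<rho>^2 / \<eta>)"
    using assms by (intro real_sqrt_less_mono) auto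
  hence "\<bar>\<theta>\<bar> / \<rho>^2 < D" unfolding D_def vgD_def using assms by (simp add: divide_strict_right_mono)
  moreover have "\<bar>C\<bar> = \<bar>\<theta>\<bar> / \<rho>^2" unfolding C_def vgC_def by simp
  ultimately have K: "K > 0" unfolding K_def by linarith
  have K1: "K + 1 \<noteq> 0" "K + 2 \<noteq> 0" using K by auto
  show ?thesis
  proof (intro conjI allI impI)
    fix u assume u: "u \<ge> 1 / (A * s)"
    define y where "y = A * s * u"
    have As: "A * s > 0" using assms by simp
    have y1: "y \<ge> 1" unfolding y_def using u As by (simp add: field_simps)
    have mf: "minfac y = 1 / y" unfolding minfac_def using y1 by simp
    have p: "(1/y) powr (K + 2) = (1/y) powr (K+1) * (1/y)"
    proof -
      have "(1/y) powr (K + 1 + 1) = (1/y) powr (K+1) * (1/y) powr 1" by (rule powr_add)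
      thus ?thesis using y1 by (simp add: add.assoc)
    qed
    have "- exp y * y / (K + 2) * (1/y) powr (K + 2) + exp y / (K + 1) * (1/y) powr (K + 1)
        = (1/y) powr (K+1) * exp y * (1 / (K+1) - 1 / (K+2))"
      unfolding p using y1 K1 by (simp add: field_simps)
    thus "kappa_hat_lower \<theta> \<rho> \<eta> (A * s) u =
              - (A * s) * vg_m \<theta> \<rho> \<eta> * u
              + exp 1 / \<eta> *
                ( (1 / (A * s * u)) powr (vgC \<theta> \<rho> + vgD \<theta> \<rho> \<eta> + 1) * exp (A * s * u)
                    * (1 / (vgC \<theta> \<rho> + vgD \<theta> \<rho> \<eta> + 1) - 1 / (vgC \<theta> \<rho> + vgD \<theta> \<rho> \<eta> + 2))
                  + A * s * u / (vgC \<theta> \<rho> + vgD \<theta> \<rho> \<eta> + 2)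
                  - (1 + A * s * u) / (vgC \<theta> \<rho> + vgD \<theta> \<rho> \<eta> + 1))"
      unfolding kappa_hat_lower_def Let_def mf C_def[symmetric] D_def[symmetric] K_def[symmetric]
        y_def[symmetric] by (simp add: add.assoc)
  next
    fix u :: real assume u: "u \<ge> 0"
    define y where "y = A * s * u"
    have y0: "y \<ge> 0" unfolding y_def using u assms by simp
    define m where "m = minfac y"
    have m: "0 < m" "m \<le> 1" unfolding m_def minfac_def using y0 by auto
    have key': "(\<integral>x. (exp (- y * x) - 1 + y * x) \<partial>vg_nu \<theta> \<rho> \<eta>) \<ge>
     (- (exp 1 / \<eta>) * (1 + y)) / (K+1) + (exp 1 / \<eta> * y) / (K+2)
     + (exp 1 / \<eta> * exp y) * m powr (K+1) / (K+1) + (- (exp 1 / \<eta> * exp y * y)) * m powr (K+2) / (K+2)"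
      unfolding K_def C_def D_def
      by (rule key) (use assms K y0 m in \<open>auto simp: K_def C_def D_def\<close>)
    have eqi: "(\<lambda>x. exp (- (A * s) * u * x) - 1 + A * s * u * x) = (\<lambda>x. exp (- y * x) - 1 + y * x)"
      unfolding y_def by simp
    have "(- (exp 1 / \<eta>) * (1 + y)) / (K+1) + (exp 1 / \<eta> * y) / (K+2)
     + (exp 1 / \<eta> * exp y) * m powr (K+1) / (K+1) + (- (exp 1 / \<eta> * exp y * y)) * m powr (K+2) / (K+2)
     = exp 1 / \<eta> * (- exp y * y / (K + 2) * m powr (K + 2) + exp y / (K + 1) * m powr (K + 1)
          + y / (K + 2) - (1 + y) / (K + 1))"
      by (simp add: divide_inverse algebra_simps)
    moreover have "kappa_hat \<theta> \<rho> \<eta> (A * s) u = - (A * s) * vg_m \<theta> \<rho> \<eta> * u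
        + (\<integral>x. (exp (- y * x) - 1 + y * x) \<partial>vg_nu \<theta> \<rho> \<eta>)"
      unfolding kappa_hat_def eqi ..
    moreover have "kappa_hat_lower \<theta> \<rho> \<eta> (A * s) u = - (A * s) * vg_m \<theta> \<rho> \<eta> * u
        + exp 1 / \<eta> * (- exp y * y / (K + 2) * m powr (K + 2) + exp y / (K + 1) * m powr (K + 1)
          + y / (K + 2) - (1 + y) / (K + 1))"
      unfolding kappa_hat_lower_def Let_def
        C_def[symmetric] D_def[symmetric] K_def[symmetric] y_def[symmetric] m_def[symmetric]
      by (simp add: add.assoc)
    ultimately show "kappa_hat \<theta> \<rho> \<eta> (A * s) u \<ge> kappa_hat_lower \<theta> \<rho> \<eta> (A * s) u"
      using key' by linarith
  qed
qed

end
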